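(* Let $x=x[1..n]$ be an indeterminate string with prefix table $\pi[1..n]$. Algorithm PCInd (described in the context), run on input $\pi$, outputs exactly the set $\Gamma$ of lengths $\kappa$ of rooted covers of $x$. It runs in $O(n^2)$ time (unit-cost elementary operations) and uses $O(n)$ extra space.
   Context: An indeterminate string $x=x[1..n]$ over an alphabet $\Sigma$ is a sequence of nonempty subsets of $\Sigma$. Two entries match, $x[i]\approx x[j]$, iff $x[i]\cap x[j]\neq\emptyset$; strings $u,w$ match ($u\approx w$) iff $|u|=|w|$ and $u[k]\approx w[k]$ for all $k$. The prefix table of $x$ is the array $\pi[1..n]$ with $\pi[1]=n$ and, for $i\in 2..n$, $\pi[i]$ the largest $\ell\ge0$ with $x[i..i+\ell-1]\approx x[1..\ell]$. A rooted cover of $x$ of length $\kappa$, $1\le\kappa<n$, is one such that every position $k\in 1..n$ lies in some interval $[p,p+\kappa-1]\subseteq[1,n]$ with $x[p..p+\kappa-1]\approx x[1..\kappa]$ (every covering substring matches the prefix of length $\kappa$; in particular the suffix of length $\kappa$ matches $x[1..\kappa]$). Algorithm PCInd (input $\pi[1..n]$, output a set $\Gamma$): Set $\Gamma\leftarrow\emptyset$, $maxlive[1..n]\leftarrow 0$, $max\leftarrow\max(\pi[2..n])$. Let $\mathcal L$ be the list, in increasing order, of the candidate lengths: the values $\pi[i]$ with $2\le i\le n$, $\pi[i]\ge 1$ and $\pi[i]+i-1=n$ (all of which are $\le max$). For $i=2,\dots,n$: set $\mathcal D\leftarrow\emptyset$ (a stack); for each $v\in\mathcal L$ in increasing order: if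 $v>\pi[i]$, stop scanning $\mathcal L$ for this $i$; otherwise let $t\leftarrow i+v-1$; if ($maxlive[v]=0$ and $t\le 2v$) or $maxlive[v]\ge t-v$ then $maxlive[v]\leftarrow t$, else $maxlive[v]\leftarrow-1$ and push $v$ onto $\mathcal D$. After the scan, pop every element of $\mathcal D$ and delete it from $\mathcal L$. Finally, for $k=1,\dots,n$: if $maxlive[k]=n$, add $k$ to $\Gamma$. Output $\Gamma$. *)

theory Defs
  imports Main
begin

text \<open>Indeterminate strings: x[1..n] is modelled as a function x :: nat => 'a set,
  of which only the positions 1..n are relevant (1-based indexing as in the paper).\<close>

definition ind_string :: "(nat \<Rightarrow> 'a set) \<Rightarrow> nat \<Rightarrow> bool" where
  "ind_string x n \<longleftrightarrow> n \<ge> 1 \<and> (\<forall>i\<in>{1..n}. x i \<noteq> {})"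

definition substr_match :: "(nat \<Rightarrow> 'a set) \<Rightarrow> nat \<Rightarrow> nat \<Rightarrow> nat \<Rightarrow> bool" where
  "substr_match x i j l \<longleftrightarrow> (\<forall>k<l. x (i + k) \<inter> x (j + k) \<noteq> {})"

definition prefix_table :: "(nat \<Rightarrow> 'a set) \<Rightarrow> nat \<Rightarrow> nat \<Rightarrow> nat" where
  "prefix_table x n i =
     (if i = 1 then n
      else if 2 \<le> i \<and> i \<le> n then (GREATEST l. l \<le> n + 1 - i \<and> substr_match x i 1 l)
      else 0)"

definition rooted_cover :: "(nat \<Rightarrow> 'a set) \<Rightarrow> nat \<Rightarrow> nat \<Rightarrow> bool" where
  "rooted_cover x n \<kappa> \<longleftrightarrow> 1 \<le> \<kappa> \<and> \<kappa> < n \<and>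
     (\<forall>k\<in>{1..n}. \<exists>p. 1 \<le> p \<and> p + \<kappa> - 1 \<le> n \<and> p \<le> k \<and> k \<le> p + \<kappa> - 1
                      \<and> substr_match x p 1 \<kappa>)"

text \<open>Inner scan of the list L for a fixed i. Arguments: pi, i, remaining list,
  maxlive, stack D, step counter. Every inspected element of L costs one step.\<close>
fun pc_scan :: "(nat \<Rightarrow> nat) \<Rightarrow> nat \<Rightarrow> nat list \<Rightarrow> (nat \<Rightarrow> int) \<Rightarrow> nat list \<Rightarrow> nat
                 \<Rightarrow> (nat \<Rightarrow> int) \<times> nat list \<times> nat" where
  "pc_scan pi i [] ml D c = (ml, D, c)"
| "pc_scan pi i (v # vs) ml D c =
     (if v > pi i then (ml, D, c + 1)
      else (let t = i + v - 1 in
            if (ml v = 0 \<and> t \<le> 2 * v) \<or> ml v \<ge> int (t - v)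
            then pc_scan pi i vs (ml(v := int t)) D (c + 1)
            else pc_scan pi i vs (ml(v := -1)) (v # D) (c + 1)))"

text \<open>State: (L, maxlive, steps, space),
  where space records the maximal extra storage used so far
  (n cells of maxlive plus the current sizes of L and D).
  Popping D and deleting its elements from L costs one step per element.\<close>
definition pc_step :: "(nat \<Rightarrow> nat) \<Rightarrow> nat \<Rightarrow> nat
     \<Rightarrow> nat list \<times> (nat \<Rightarrow> int) \<times> nat \<times> nat \<Rightarrow> nat list \<times> (nat \<Rightarrow> int) \<times> nat \<times> nat" where
  "pc_step pi n i st =
     (case st of (L, ml, c, sp) \<Rightarrow>
       (case pc_scan pi i L ml [] c of (ml', D, c') \<Rightarrow>
          (filter (\<lambda>v. v \<notin> set D) L, ml', c' + 1 + length D,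
           max sp (n + length L + length D))))"

definition pc_candidates :: "(nat \<Rightarrow> nat) \<Rightarrow> nat \<Rightarrow> nat list" where
  "pc_candidates pi n = sort [pi i. i \<leftarrow> [2..<n+1], 1 \<le> pi i \<and> pi i + i - 1 = n]"

text \<open>Initialisation of maxlive, computing max(pi[2..n]) and building the candidate list
  are charged n steps each; the final loop is charged n steps.\<close>
definition pc_run :: "(nat \<Rightarrow> nat) \<Rightarrow> nat \<Rightarrow> nat set \<times> nat \<times> nat" where
  "pc_run pi n =
     (let L0 = pc_candidates pi n;
          (L, ml, c, sp) = fold (pc_step pi n) [2..<n+1] (L0, (\<lambda>_. 0), 3 * n, n + length L0)
      in ({k \<in> {1..n}. ml k = int n}, c + n, sp))"

definition PCInd :: "(nat \<Rightarrow> nat) \<Rightarrow> nat \<Rightarrow> nat set" where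
  "PCInd pi n = fst (pc_run pi n)"

definition PCInd_time :: "(nat \<Rightarrow> nat) \<Rightarrow> nat \<Rightarrow> nat" where
  "PCInd_time pi n = fst (snd (pc_run pi n))"

definition PCInd_space :: "(nat \<Rightarrow> nat) \<Rightarrow> nat \<Rightarrow> nat" where
  "PCInd_space pi n = snd (snd (pc_run pi n))"

end

theory Submission imports Defs begin

definition upd :: "(nat\<Rightarrow>nat) \<Rightarrow> nat \<Rightarrow> nat \<Rightarrow> int \<Rightarrow> int" where
"upd pi i v a = (if v > pi i then a else (let t = i + v - 1 in
   if (a = 0 \<and> t \<le> 2*v) \<or> a \<ge> int (t - v) then int t else -1))"

lemma upd_neg: "upd pi i v (-1) = -1"
  by (simp add: upd_def Let_def)

lemma scan:
  assumes "sorted L" "distinct L" "pc_scan pi i L ml D c = (ml', D', c')"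
  shows "(\<forall>v. ml' v = (if v \<in> set L then upd pi i v (ml v) else ml v)) \<and>
         set D' = set D \<union> {v\<in>set L. v \<le> pi i \<and> upd pi i v (ml v) = -1} \<and>
         length D' \<le> length D + length L \<and> c' \<le> c + length L"
  using assms
proof (induction L arbitrary: ml D c)
  case Nil
  then show ?case by simp
next
  case (Cons v vs)
  have sv: "\<forall>w\<in>set vs. v \<le> w" "sorted vs" "v \<notin> set vs" "distinct vs"
    using Cons.prems by auto
  show ?case
  proof (cases "v > pi i")
    case True
    then have "\<forall>w\<in>set vs. pi i < w" using sv by fastforce
    then show ?thesis using True Cons.prems by (auto simp: upd_def)
  next
    case False
    define t where "t = i + v - 1"
    have eq: "pc_scan pi i (v # vs) ml D c = (if (ml v = 0 \<and> t \<le> 2*v) \<or> ml v \<ge> int (t - v) then pc_scan pi i vs (ml(v := int t)) D (c + 1) else pc_scan pi i vs (ml(v := -1)) (v # D) (c + 1))"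
      using False unfolding t_def by (simp add: Let_def)
    show ?thesis
    proof (cases "(ml v = 0 \<and> t \<le> 2*v) \<or> ml v \<ge> int (t - v)")
      case True
      then have r: "pc_scan pi i vs (ml(v := int t)) D (c + 1) = (ml', D', c')"
        using Cons.prems eq by simp
      have u: "upd pi i v (ml v) = int t" using True False unfolding t_def by (simp add: upd_def Let_def)
      from Cons.IH[OF sv(2,4) r] sv(3) u show ?thesis
        by (auto split: if_splits)
    next
      case F2: False
      then have r: "pc_scan pi i vs (ml(v := -1)) (v#D) (c + 1) = (ml', D', c')"
        using Cons.prems eq by (simp only: if_False)
      have u: "upd pi i v (ml v) = -1" using F2 False unfolding t_def by (simp add: upd_def Let_def)
      from Cons.IH[OF sv(2,4) r] sv(3) u False show ?thesis
        by (auto split: if_splits)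
    qed
  qed
qed

lemma pstep:
  assumes "sorted L0" "distinct L0" "L = filter (\<lambda>v. ml v \<noteq> -1) L0" "length L0 \<le> n"
    and "pc_step pi n i (L, ml, c, sp) = (L', ml', c', sp')"
  shows "L' = filter (\<lambda>v. ml' v \<noteq> -1) L0 \<and>
     (\<forall>v. ml' v = (if v \<in> set L0 then upd pi i v (ml v) else ml v)) \<and>
     c' \<le> c + 2*n + 1 \<and> sp' \<le> max sp (3*n)"
proof -
  obtain ml1 D c1 where sc: "pc_scan pi i L ml [] c = (ml1, D, c1)" by (metis prod_cases3)
  have res: "L' = filter (\<lambda>v. v \<notin> set D) L" "ml' = ml1" "c' = c1 + 1 + length D"
     "sp' = max sp (n + length L + length D)"
    using assms(5) sc by (auto simp: pc_step_def)
  have sL: "sorted L" "distinct L" using assms(1,2,3) by (auto simp: sorted_wrt_filter)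
  note S = scan[OF sL sc]
  have lL: "length L \<le> n" using assms(3,4) by (metis dual_order.trans length_filter_le)
  have sub: "set L \<subseteq> set L0" using assms(3) by auto
  have ml1: "\<forall>v. ml1 v = (if v \<in> set L0 then upd pi i v (ml v) else ml v)"
  proof
    fix v show "ml1 v = (if v \<in> set L0 then upd pi i v (ml v) else ml v)"
      using S sub assms(3) upd_neg[of pi i v] by (cases "v \<in> set L") auto
  qed
  have "L' = filter (\<lambda>v. ml1 v \<noteq> -1) L0"
    unfolding res(1) assms(3) filter_filter
  proof (rule filter_cong[OF refl])
    fix v assume v: "v \<in> set L0"
    show "(ml v \<noteq> -1 \<and> v \<notin> set D) = (ml1 v \<noteq> -1)"
      using S v ml1 assms(3) upd_neg[of pi i v] by (auto simp: upd_def)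
  qed
  then show ?thesis using res S lL ml1 by auto
qed

lemma fold_inv:
  assumes "sorted L0" "distinct L0" "length L0 \<le> n" "2 \<le> m"
  shows "case fold (pc_step pi n) [2..<m] (L0, \<lambda>_. 0, 3*n, n + length L0) of (L, ml, c, sp) \<Rightarrow>
     L = filter (\<lambda>v. ml v \<noteq> -1) L0 \<and>
     (\<forall>v. ml v = (if v \<in> set L0 then foldl (\<lambda>a j. upd pi j v a) 0 [2..<m] else 0)) \<and>
     c \<le> 3*n + (m-2)*(2*n+1) \<and> sp \<le> 3*n"
  using assms(4)
proof (induction m rule: dec_induct)
  case base
  then show ?case using assms(3) by (auto intro: filter_True[symmetric])
next
  case (step m)
  obtain L ml c sp where F: "fold (pc_step pi n) [2..<m] (L0, \<lambda>_. 0, 3*n, n + length L0) = (L, ml, c, sp)"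
    by (metis prod_cases4)
  obtain L' ml' c' sp' where G: "pc_step pi n m (L, ml, c, sp) = (L', ml', c', sp')"
    by (metis prod_cases4)
  have I: "L = filter (\<lambda>v. ml v \<noteq> -1) L0"
     "\<forall>v. ml v = (if v \<in> set L0 then foldl (\<lambda>a j. upd pi j v a) 0 [2..<m] else 0)"
     "c \<le> 3*n + (m-2)*(2*n+1)" "sp \<le> 3*n" using step.IH F by auto
  note T = pstep[OF assms(1,2) I(1) assms(3) G]
  have e: "fold (pc_step pi n) [2..<Suc m] (L0, \<lambda>_. 0, 3*n, n + length L0) = (L', ml', c', sp')"
    using step.hyps F G by simp
  have c: "c' \<le> 3*n + (Suc m-2)*(2*n+1)"
  proof -
    have "(Suc m - 2)*(2*n+1) = (m-2)*(2*n+1) + (2*n+1)" using step.hyps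
      by (metis Suc_diff_le add.commute mult_Suc)
    then show ?thesis using T I(3) by linarith
  qed
  show ?case unfolding e using T I c step.hyps by auto
qed

definition occ :: "(nat\<Rightarrow>nat) \<Rightarrow> nat \<Rightarrow> nat \<Rightarrow> nat \<Rightarrow> bool" where
  "occ pi n v p \<longleftrightarrow> p = 1 \<or> (2 \<le> p \<and> p \<le> n \<and> v \<le> pi p)"

definition cov :: "(nat\<Rightarrow>nat) \<Rightarrow> nat \<Rightarrow> nat \<Rightarrow> nat \<Rightarrow> nat \<Rightarrow> bool" where
  "cov pi n v m e \<longleftrightarrow> (\<forall>q. 1 \<le> q \<and> q \<le> e \<longrightarrow> (\<exists>p. occ pi n v p \<and> p < m \<and> p \<le> q \<and> q \<le> p + v - 1))"

lemma upd_occ: "v \<le> pi i \<Longrightarrow> 1 \<le> v \<Longrightarrow>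
  upd pi i v a = (if (a = 0 \<and> i+v-1 \<le> 2*v) \<or> a \<ge> int (i-1) then int (i+v-1) else -1)"
  by (simp add: upd_def Let_def)

lemma walk:
  assumes "1 \<le> v" "2 \<le> m" "m \<le> n+1"
  shows "\<forall>lo. occ pi n v lo \<and> lo < m \<and> (\<forall>p. occ pi n v p \<and> p < m \<longrightarrow> p \<le> lo) \<longrightarrow>
     (foldl (\<lambda>a j. upd pi j v a) 0 [2..<m] = -1 \<longleftrightarrow> \<not> cov pi n v m (lo+v-1)) \<and>
     (foldl (\<lambda>a j. upd pi j v a) 0 [2..<m] \<noteq> -1 \<longrightarrow>
        foldl (\<lambda>a j. upd pi j v a) 0 [2..<m] = (if lo = 1 then 0 else int (lo+v-1)))"
  using assms(2,3)
proof (induction m rule: dec_induct)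
  case base
  show ?case
  proof (intro allI impI)
    fix lo assume h: "occ pi n v lo \<and> lo < 2 \<and> (\<forall>p. occ pi n v p \<and> p < 2 \<longrightarrow> p \<le> lo)"
    then have lo: "lo = 1" by (auto simp: occ_def)
    have "cov pi n v 2 (lo+v-1)" unfolding cov_def lo
      by (intro allI impI, rule exI[of _ 1]) (auto simp: occ_def)
    then show "(foldl (\<lambda>a j. upd pi j v a) 0 [2..<2] = -1 \<longleftrightarrow> \<not> cov pi n v 2 (lo+v-1)) \<and>
     (foldl (\<lambda>a j. upd pi j v a) 0 [2..<2] \<noteq> -1 \<longrightarrow>
        foldl (\<lambda>a j. upd pi j v a) 0 [2..<2] = (if lo = 1 then 0 else int (lo+v-1)))"
      using lo by simp
  qed
next
  case (step m)
  define a where "a = foldl (\<lambda>a j. upd pi j v a) 0 [2..<m]"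
  have a': "foldl (\<lambda>a j. upd pi j v a) 0 [2..<Suc m] = upd pi m v a"
    using step.hyps by (simp add: a_def)
  define S where "S = {p. occ pi n v p \<and> p < m}"
  have fS: "finite S" "1 \<in> S" using step.hyps by (auto simp: S_def occ_def)
  define lo0 where "lo0 = Max S"
  have lo0: "occ pi n v lo0" "lo0 < m" "\<forall>p. occ pi n v p \<and> p < m \<longrightarrow> p \<le> lo0"
  proof -
    have "Max S \<in> S" using fS by (intro Max_in) auto
    moreover have "\<forall>p\<in>S. p \<le> Max S" using fS(1) by auto
    ultimately show "occ pi n v lo0" "lo0 < m" "\<forall>p. occ pi n v p \<and> p < m \<longrightarrow> p \<le> lo0"
      unfolding lo0_def S_def by auto
  qed
  have IH: "(a = -1 \<longleftrightarrow> \<not> cov pi n v m (lo0+v-1)) \<and> (a \<noteq> -1 \<longrightarrow> a = (if lo0 = 1 then 0 else int (lo0+v-1)))"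
    using step.IH step.prems lo0 unfolding a_def by auto
  have lo0ge: "lo0 \<ge> 1" using lo0(1) by (auto simp: occ_def)
  have mn: "m \<le> n" using step.prems by simp
  show ?case
  proof (intro allI impI)
    fix lo assume h: "occ pi n v lo \<and> lo < Suc m \<and> (\<forall>p. occ pi n v p \<and> p < Suc m \<longrightarrow> p \<le> lo)"
    have "(upd pi m v a = -1 \<longleftrightarrow> \<not> cov pi n v (Suc m) (lo+v-1)) \<and>
     (upd pi m v a \<noteq> -1 \<longrightarrow> upd pi m v a = (if lo = 1 then 0 else int (lo+v-1)))"
    proof (cases "v \<le> pi m")
      case False
      then have no: "\<not> occ pi n v m" using step.hyps by (auto simp: occ_def)
      then have "lo = lo0" using h lo0 by (metis le_antisym less_Suc_eq)
      moreover have "cov pi n v (Suc m) e = cov pi n v m e" for e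
        unfolding cov_def using no by (metis less_Suc_eq)
      moreover have "upd pi m v a = a" using False by (simp add: upd_def)
      ultimately show ?thesis using IH by (metis cov_def)
    next
      case True
      have om: "occ pi n v m" using True step.hyps mn by (auto simp: occ_def)
      then have lom: "lo = m" using h by (metis le_antisym less_Suc_eq_le lessI)
      have u: "upd pi m v a = (if (a = 0 \<and> m+v-1 \<le> 2*v) \<or> a \<ge> int (m-1) then int (m+v-1) else -1)"
        using upd_occ[of v pi m, OF True assms(1)] .
      have m1: "m \<noteq> 1" using step.hyps by simp
      show ?thesis
      proof (cases "a = -1")
        case True
        then obtain q where q: "1 \<le> q" "q \<le> lo0+v-1"
          "\<not>(\<exists>p. occ pi n v p \<and> p < m \<and> p \<le> q \<and> q \<le> p + v - 1)"
          using IH unfolding cov_def by auto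
        have "q < lo0" using q lo0 by (metis not_le)
        have "\<not> cov pi n v (Suc m) (lo+v-1)"
        proof
          assume c: "cov pi n v (Suc m) (lo+v-1)"
          have "q \<le> m+v-1" using q lo0(2) by linarith
          then obtain p where p: "occ pi n v p" "p < Suc m" "p \<le> q" "q \<le> p+v-1"
            using c q(1) unfolding cov_def lom by blast
          then have "p < m" using \<open>q < lo0\<close> lo0(2) by linarith
          then show False using q(3) p by blast
        qed
        then show ?thesis using u True by simp
      next
        case an: False
        show ?thesis
        proof (cases "lo0 = 1")
          case True
          then have a0: "a = 0" using IH an by simp
          show ?thesis
          proof (cases "m \<le> v+1")
            case True
            have "cov pi n v (Suc m) (lo+v-1)" unfolding cov_def lom
            proof (intro allI impI)
              fix q assume "1 \<le> q \<and> q \<le> m + v - 1"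
              then show "\<exists>p. occ pi n v p \<and> p < Suc m \<and> p \<le> q \<and> q \<le> p + v - 1"
              proof (cases "q \<le> v")
                case True
                then show ?thesis using step.hyps \<open>1 \<le> q \<and> q \<le> m + v - 1\<close>
                  by (intro exI[of _ 1]) (auto simp: occ_def)
              next
                case False
                then show ?thesis using om \<open>m \<le> v+1\<close> \<open>1 \<le> q \<and> q \<le> m + v - 1\<close>
                  by (intro exI[of _ m]) auto
              qed
            qed
            moreover have "m+v-1 \<le> 2*v" using True by linarith
            ultimately show ?thesis using u a0 m1 lom by simp
          next
            case False
            have "\<not> cov pi n v (Suc m) (lo+v-1)"
            proof
              assume "cov pi n v (Suc m) (lo+v-1)"
              moreover have "1 \<le> v+1" "v+1 \<le> m+v-1" using False by linarith+
              ultimately obtain p where p: "occ pi n v p" "p < Suc m" "p \<le> v+1" "v+1 \<le> p+v-1"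
                unfolding cov_def lom by blast
              then have "p \<ge> 2" "p < m" using False by auto
              then show False using p lo0(3) True by fastforce
            qed
            then show ?thesis using u a0 False by simp
          qed
        next
          case False
          then have aa: "a = int (lo0+v-1)" and cv: "cov pi n v m (lo0+v-1)" using IH an by auto
          have a00: "a \<noteq> 0" using aa lo0ge assms(1) by simp
          show ?thesis
          proof (cases "lo0+v-1 \<ge> m-1")
            case True
            have "cov pi n v (Suc m) (lo+v-1)" unfolding cov_def lom
            proof (intro allI impI)
              fix q assume q: "1 \<le> q \<and> q \<le> m + v - 1"
              show "\<exists>p. occ pi n v p \<and> p < Suc m \<and> p \<le> q \<and> q \<le> p + v - 1"
              proof (cases "q \<le> lo0+v-1")
                case True
                then show ?thesis using cv q unfolding cov_def by (meson less_Suc_eq)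
              next
                case False
                then show ?thesis using q om \<open>lo0+v-1 \<ge> m-1\<close> by (intro exI[of _ m]) auto
              qed
            qed
            then show ?thesis using u aa a00 True m1 lom by simp
          next
            case F2: False
            have "\<not> cov pi n v (Suc m) (lo+v-1)"
            proof
              assume "cov pi n v (Suc m) (lo+v-1)"
              moreover have "1 \<le> lo0 + v" "lo0 + v \<le> lo + v - 1" using lom lo0(2) lo0ge by auto
              ultimately obtain p where p: "occ pi n v p" "p < Suc m" "p \<le> lo0+v" "lo0+v \<le> p+v-1"
                unfolding cov_def by blast
              then have "lo0 < p" "p < m" using F2 lo0ge by linarith+
              then show False using p lo0(3) by fastforce
            qed
            then show ?thesis using u aa a00 F2 by simp
          qed
        qed
      qed
    qed
    then show "(foldl (\<lambda>a j. upd pi j v a) 0 [2..<Suc m] = -1 \<longleftrightarrow> \<not> cov pi n v (Suc m) (lo+v-1)) \<and>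
     (foldl (\<lambda>a j. upd pi j v a) 0 [2..<Suc m] \<noteq> -1 \<longrightarrow>
        foldl (\<lambda>a j. upd pi j v a) 0 [2..<Suc m] = (if lo = 1 then 0 else int (lo+v-1)))"
      unfolding a' .
  qed
qed

lemma lc_eq: "[f i. i \<leftarrow> xs, P i] = map f (filter P xs)"
  by (induct xs) auto

lemma cand_facts: "sorted (pc_candidates pi n) \<and> distinct (pc_candidates pi n) \<and>
   length (pc_candidates pi n) \<le> n \<and>
   set (pc_candidates pi n) = {v. \<exists>i. 2 \<le> i \<and> i \<le> n \<and> 1 \<le> pi i \<and> pi i + i - 1 = n \<and> v = pi i}"
proof -
  define P where "P = (\<lambda>i. 1 \<le> pi i \<and> pi i + i - 1 = n)"
  have e: "[pi i. i \<leftarrow> [2..<n+1], 1 \<le> pi i \<and> pi i + i - 1 = n] = map pi (filter P [2..<n+1])"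
    unfolding P_def by (rule lc_eq)
  have inj: "inj_on pi (set (filter P [2..<n+1]))"
  proof (rule inj_onI)
    fix a b assume "a \<in> set (filter P [2..<n+1])" "b \<in> set (filter P [2..<n+1])" "pi a = pi b"
    then have "P a" "P b" by (simp_all del: upt_Suc)
    then have "pi a + a - 1 = n" "pi b + b - 1 = n" "1 \<le> pi a" unfolding P_def by blast+
    then show "a = b" using \<open>pi a = pi b\<close> by linarith
  qed
  have d: "distinct (map pi (filter P [2..<n+1]))"
    using inj by (simp add: distinct_map)
  have "length (filter P [2..<n+1]) \<le> length [2..<n+1]"
    by (rule length_filter_le)
  then have l: "length (map pi (filter P [2..<n+1])) \<le> n" by (simp del: upt_Suc)
  have st: "set (map pi (filter P [2..<n+1])) = {v. \<exists>i. 2 \<le> i \<and> i \<le> n \<and> 1 \<le> pi i \<and> pi i + i - 1 = n \<and> v = pi i}"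
  proof (rule set_eqI)
    fix v show "v \<in> set (map pi (filter P [2..<n+1])) \<longleftrightarrow> v \<in> {v. \<exists>i. 2 \<le> i \<and> i \<le> n \<and> 1 \<le> pi i \<and> pi i + i - 1 = n \<and> v = pi i}"
      unfolding set_map set_filter set_upt P_def image_iff mem_Collect_eq atLeastLessThan_iff by fastforce
  qed
  show ?thesis unfolding pc_candidates_def e using d l st by (simp del: upt_Suc)
qed

lemma run_facts:
  assumes "1 \<le> n"
  shows "\<exists>ml c sp. pc_run pi n = ({k\<in>{1..n}. ml k = int n}, c + n, sp) \<and>
     (\<forall>v. ml v = (if v \<in> set (pc_candidates pi n) then foldl (\<lambda>a j. upd pi j v a) 0 [2..<n+1] else 0)) \<and>
     c \<le> 3*n + (n-1)*(2*n+1) \<and> sp \<le> 3*n"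
proof -
  define L0 where "L0 = pc_candidates pi n"
  have cf: "sorted L0" "distinct L0" "length L0 \<le> n" using cand_facts[of pi n] by (auto simp: L0_def)
  obtain L ml c sp where F: "fold (pc_step pi n) [2..<n+1] (L0, \<lambda>_. 0, 3*n, n + length L0) = (L, ml, c, sp)"
    by (metis prod_cases4)
  have I: "\<forall>v. ml v = (if v \<in> set L0 then foldl (\<lambda>a j. upd pi j v a) 0 [2..<n+1] else 0)"
     "c \<le> 3*n + (n+1-2)*(2*n+1)" "sp \<le> 3*n"
    using fold_inv[OF cf, of "n+1" pi] assms F by (auto simp del: upt_Suc)
  have "pc_run pi n = ({k\<in>{1..n}. ml k = int n}, c + n, sp)"
    unfolding pc_run_def L0_def[symmetric] Let_def F by (simp del: upt_Suc)
  moreover have c2: "c \<le> 3*n + (n-1)*(2*n+1)" using I(2) by (simp del: upt_Suc)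
  ultimately show ?thesis using I(1,3) unfolding L0_def by blast
qed

lemma sm_mono: "substr_match x i j l \<Longrightarrow> l' \<le> l \<Longrightarrow> substr_match x i j l'"
  by (auto simp: substr_match_def)

lemma pt_facts:
  assumes "2 \<le> i" "i \<le> n"
  shows "prefix_table x n i \<le> n+1-i \<and>
     (\<forall>l. l \<le> n+1-i \<longrightarrow> (l \<le> prefix_table x n i \<longleftrightarrow> substr_match x i 1 l))"
proof -
  define P where "P = (\<lambda>l. l \<le> n + 1 - i \<and> substr_match x i 1 l)"
  have pt: "prefix_table x n i = (GREATEST l. P l)" using assms by (simp add: prefix_table_def P_def)
  have P0: "P 0" by (simp add: P_def substr_match_def)
  have b: "\<forall>y. P y \<longrightarrow> y \<le> n+1-i" by (simp add: P_def)
  have G: "P (GREATEST l. P l)" using GreatestI_nat[of P 0 "n+1-i"] P0 b by blast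
  have G2: "\<And>l. P l \<Longrightarrow> l \<le> (GREATEST l. P l)" using Greatest_le_nat[of P _ "n+1-i"] b by blast
  have "(GREATEST l. P l) \<le> n+1-i" using G by (simp add: P_def)
  moreover have "l \<le> (GREATEST l. P l) \<longleftrightarrow> substr_match x i 1 l" if "l \<le> n+1-i" for l
  proof
    assume "l \<le> (GREATEST l. P l)"
    then show "substr_match x i 1 l" using G sm_mono unfolding P_def by blast
  next
    assume "substr_match x i 1 l"
    then show "l \<le> (GREATEST l. P l)" using G2 that unfolding P_def by blast
  qed
  ultimately show ?thesis unfolding pt by blast
qed

lemma time_arith:
  fixes n c :: nat
  assumes "1 \<le> n" "c \<le> 3*n + (n-1)*(2*n+1)"
  shows "c + n \<le> 8 * n^2"
proof -
  have a: "(n-1)*(2*n+1) \<le> n*(2*n+1)" by (rule mult_le_mono1) simp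
  have b: "n*(2*n+1) = 2*(n*n) + n" by (simp add: algebra_simps)
  have c: "n \<le> n*n" using assms(1) by simp
  have "n^2 = n*n" by (simp add: power2_eq_square)
  then show ?thesis using assms a b c by linarith
qed

declare upt_Suc[simp del]

lemma correct:
  assumes xs: "ind_string x n"
  shows "k \<in> PCInd (prefix_table x n) n \<longleftrightarrow> rooted_cover x n k"
proof -
  define pi where "pi = prefix_table x n"
  have n1: "1 \<le> n" and ne: "\<And>i. 1 \<le> i \<Longrightarrow> i \<le> n \<Longrightarrow> x i \<noteq> {}"
    using xs by (auto simp: ind_string_def)
  obtain ml c sp where R: "pc_run pi n = ({k\<in>{1..n}. ml k = int n}, c + n, sp)"
    and MLv: "\<forall>v. ml v = (if v \<in> set (pc_candidates pi n) then foldl (\<lambda>a j. upd pi j v a) 0 [2..<n+1] else 0)"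
    using run_facts[OF n1, of pi] by blast
  have P: "PCInd pi n = {k\<in>{1..n}. ml k = int n}" using R by (simp add: PCInd_def)
  have PT: "\<And>i. 2 \<le> i \<Longrightarrow> i \<le> n \<Longrightarrow> pi i \<le> n+1-i \<and>
     (\<forall>l. l \<le> n+1-i \<longrightarrow> (l \<le> pi i \<longleftrightarrow> substr_match x i 1 l))"
    unfolding pi_def by (rule pt_facts)
  show ?thesis
  proof (cases "1 \<le> k \<and> k \<le> n")
    case False
    then show ?thesis unfolding P pi_def[symmetric] rooted_cover_def by auto
  next
    case True
    then have k1: "1 \<le> k" and kn: "k \<le> n" by auto
    have mem: "k \<in> set (pc_candidates pi n) \<longleftrightarrow> k < n \<and> k \<le> pi (n+1-k)"
    proof
      assume "k \<in> set (pc_candidates pi n)"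
      then obtain i where i: "2 \<le> i" "i \<le> n" "1 \<le> pi i" "pi i + i - 1 = n" "k = pi i"
        using cand_facts[of pi n] by auto
      then have "i = n+1-k" by linarith
      then show "k < n \<and> k \<le> pi (n+1-k)" using i by auto
    next
      assume h: "k < n \<and> k \<le> pi (n+1-k)"
      define i where "i = n+1-k"
      have i: "2 \<le> i" "i \<le> n" using h k1 by (auto simp: i_def)
      have "pi i \<le> k" using PT[OF i] h k1 unfolding i_def by simp
      then have "pi i = k" using h i_def by simp
      then show "k \<in> set (pc_candidates pi n)" using cand_facts[of pi n] i k1 h
        unfolding i_def by auto
    qed
    have obound: "1 \<le> p \<and> p + k - 1 \<le> n" if "occ pi n k p" for p
    proof (cases "p = 1")
      case True then show ?thesis using kn by simp
    next
      case False
      then have "2 \<le> p" "p \<le> n" "k \<le> pi p" using that by (auto simp: occ_def)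
      then show ?thesis using PT[of p] by auto
    qed
    have smeq: "substr_match x p 1 k \<longleftrightarrow> occ pi n k p" if "1 \<le> p" "p + k - 1 \<le> n" for p
    proof (cases "p = 1")
      case True
      have "substr_match x 1 1 k" unfolding substr_match_def using ne kn by auto
      then show ?thesis using True by (simp add: occ_def)
    next
      case False
      then have p: "2 \<le> p" "p \<le> n" using that k1 by auto
      have "k \<le> n+1-p" using that k1 by linarith
      then show ?thesis using PT[OF p] p by (auto simp: occ_def)
    qed
    have rc: "rooted_cover x n k \<longleftrightarrow> k < n \<and> cov pi n k (n+1) n"
    proof -
      have "(\<exists>p. 1 \<le> p \<and> p + k - 1 \<le> n \<and> p \<le> q \<and> q \<le> p + k - 1 \<and> substr_match x p 1 k)
         \<longleftrightarrow> (\<exists>p. occ pi n k p \<and> p < n+1 \<and> p \<le> q \<and> q \<le> p + k - 1)" for q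
      proof
        assume "\<exists>p. 1 \<le> p \<and> p + k - 1 \<le> n \<and> p \<le> q \<and> q \<le> p + k - 1 \<and> substr_match x p 1 k"
        then obtain p where p: "1 \<le> p" "p + k - 1 \<le> n" "p \<le> q" "q \<le> p + k - 1" "substr_match x p 1 k" by blast
        then have "occ pi n k p" "p < n+1" using smeq[OF p(1,2)] k1 by auto
        then show "\<exists>p. occ pi n k p \<and> p < n+1 \<and> p \<le> q \<and> q \<le> p + k - 1" using p by blast
      next
        assume "\<exists>p. occ pi n k p \<and> p < n+1 \<and> p \<le> q \<and> q \<le> p + k - 1"
        then obtain p where p: "occ pi n k p" "p \<le> q" "q \<le> p + k - 1" by blast
        have b: "1 \<le> p" "p + k - 1 \<le> n" using obound[OF p(1)] by auto
        then show "\<exists>p. 1 \<le> p \<and> p + k - 1 \<le> n \<and> p \<le> q \<and> q \<le> p + k - 1 \<and> substr_match x p 1 k"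
          using p smeq[OF b] by blast
      qed
      then show ?thesis unfolding rooted_cover_def cov_def using k1 by auto
    qed
    show ?thesis
    proof (cases "k \<in> set (pc_candidates pi n)")
      case False
      then have "ml k \<noteq> int n" using MLv n1 by simp
      moreover have "\<not> rooted_cover x n k"
      proof
        assume r: "rooted_cover x n k"
        then have kl: "k < n" unfolding rooted_cover_def by simp
        have "n \<in> {1..n}" using n1 by simp
        then have "\<exists>p. 1 \<le> p \<and> p + k - 1 \<le> n \<and> p \<le> n \<and> n \<le> p + k - 1 \<and> substr_match x p 1 k"
          using r unfolding rooted_cover_def by blast
        then obtain p where p: "1 \<le> p" "p + k - 1 \<le> n" "p \<le> n" "n \<le> p + k - 1" "substr_match x p 1 k"
          by blast
        then have "p = n+1-k" using k1 by linarith
        moreover have "occ pi n k p" using smeq p by blast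
        ultimately have "k \<le> pi (n+1-k)" using kl k1 by (auto simp: occ_def)
        then show False using mem kl False by blast
      qed
      ultimately show ?thesis unfolding pi_def[symmetric] P by simp
    next
      case T: True
      define a where "a = foldl (\<lambda>a j. upd pi j k a) 0 [2..<n+1]"
      have mlk: "ml k = a" using MLv T a_def by simp
      define lo where "lo = n+1-k"
      have kl: "k < n" and klo: "k \<le> pi lo" using mem T lo_def by auto
      have lo: "occ pi n k lo" "lo < n+1" "\<forall>p. occ pi n k p \<and> p < n+1 \<longrightarrow> p \<le> lo" "lo \<noteq> 1"
        "lo + k - 1 = n"
      proof -
        show "occ pi n k lo" using kl k1 klo unfolding occ_def lo_def by auto
        show "lo < n+1" "lo \<noteq> 1" "lo + k - 1 = n" using kl k1 unfolding lo_def by linarith+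
        show "\<forall>p. occ pi n k p \<and> p < n+1 \<longrightarrow> p \<le> lo"
        proof (intro allI impI)
          fix p assume "occ pi n k p \<and> p < n+1"
          then have "p + k - 1 \<le> n" "1 \<le> p" using obound by auto
          then show "p \<le> lo" unfolding lo_def using k1 by linarith
        qed
      qed
      have W: "(a = -1 \<longleftrightarrow> \<not> cov pi n k (n+1) (lo+k-1)) \<and> (a \<noteq> -1 \<longrightarrow> a = (if lo = 1 then 0 else int (lo+k-1)))"
      proof -
        have "2 \<le> n+1" using n1 by simp
        note WW = walk[OF k1 this order_refl, of pi]
        show ?thesis using WW lo(1-3) unfolding a_def[symmetric] by blast
      qed
      have ac: "a = int n \<longleftrightarrow> cov pi n k (n+1) n"
      proof (cases "a = -1")
        case True then show ?thesis using W lo(5) n1 by simp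
      next
        case False then show ?thesis using W lo(4,5) by simp
      qed
      have "k \<in> PCInd pi n \<longleftrightarrow> a = int n" unfolding P using mlk True by simp
      then show ?thesis using rc kl ac unfolding pi_def by simp
    qed
  qed
qed

theorem theorem2:
  "(\<forall>(x :: nat \<Rightarrow> 'a set) n. ind_string x n \<longrightarrow>
       PCInd (prefix_table x n) n = {\<kappa>. rooted_cover x n \<kappa>})
   \<and> (\<exists>C :: nat. \<forall>(x :: nat \<Rightarrow> 'a set) n. ind_string x n \<longrightarrow>
       PCInd_time (prefix_table x n) n \<le> C * n ^ 2 \<and>
       PCInd_space (prefix_table x n) n \<le> C * n)"
proof (intro conjI allI impI)
  fix x :: "nat \<Rightarrow> 'a set" and n assume h: "ind_string x n"
  show "PCInd (prefix_table x n) n = {\<kappa>. rooted_cover x n \<kappa>}"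
    using correct[OF h] by (simp add: set_eq_iff)
next
  show "\<exists>C :: nat. \<forall>(x :: nat \<Rightarrow> 'a set) n. ind_string x n \<longrightarrow>
       PCInd_time (prefix_table x n) n \<le> C * n ^ 2 \<and>
       PCInd_space (prefix_table x n) n \<le> C * n"
  proof (intro exI[of _ 8] allI impI)
    fix x :: "nat \<Rightarrow> 'a set" and n assume h: "ind_string x n"
    then have n1: "1 \<le> n" by (simp add: ind_string_def)
    obtain ml c sp where R: "pc_run (prefix_table x n) n = ({k\<in>{1..n}. ml k = int n}, c + n, sp)"
      and c: "c \<le> 3*n + (n-1)*(2*n+1)" and s: "sp \<le> 3*n"
      using run_facts[OF n1, of "prefix_table x n"] by blast
    have "PCInd_time (prefix_table x n) n = c + n" "PCInd_space (prefix_table x n) n = sp"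
      using R by (simp_all add: PCInd_time_def PCInd_space_def)
    then show "PCInd_time (prefix_table x n) n \<le> 8 * n ^ 2 \<and> PCInd_space (prefix_table x n) n \<le> 8 * n"
      using time_arith[OF n1 c] s by linarith
  qed
qed

end
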